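(* Let $(\mathcal A,\varphi,\mathcal F,\Phi)$ be a ncps of type B$'$ with associated algebra $\mathcal B$ and functional $\varphi$ on $\mathcal B$. For $i\in I$ let $\mathcal A_i$ be a subalgebra of $\mathcal A$ containing $1_{\mathcal A}$, $\mathcal F_i$ a subalgebra of $\mathcal F$, and $\mathcal B_i=\mathcal A_i\langle\mathcal F_i\rangle$ the subalgebra of $\mathcal B$ generated by $\mathcal A_i\oplus\mathcal F_i$. Let $P\in\mathcal F$ with $\Phi(P)\ne0$ and $\mathcal F_P:=\{cP^n: n\in\mathbb N,c\in\mathbb C\}$. Assume that $((\mathcal A_i)_{i\in I},(\mathcal F_i)_{i\in I\sqcup\{P\}})$ is weakly B$'$-free. Then $(\mathcal B_i)_{i\in I}$ are conditionally free with respect to $(\varphi,\varphi_P)$ if and only if $(\mathcal F_i)_{i\in I}$ are Boolean independent with respect to $\varphi_P$.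
   Context: Ncps of type B$'$ $(\mathcal A,\varphi,\mathcal F,\Phi)$: $\mathcal A$ unital complex algebra, $\varphi(1_{\mathcal A})=1$, $\mathcal F$ an algebra which is an $\mathcal A$-bimodule compatible with its multiplication, $\Phi:\mathcal F\to\mathbb C$ linear. $\mathcal B=\mathcal A\oplus\mathcal F$ with product $(a_1,f_1)(a_2,f_2)=(a_1a_2,a_1f_2+f_1a_2+f_1f_2)$, unit $1_{\mathcal A}$; $\varphi(a+f):=\varphi(a)$, $\varphi'(a+f):=\Phi(f)$. For $P\in\mathcal F$ with $\Phi(P)\neq0$, $\varphi_P(b):=\Phi(Pb)/\Phi(P)$ for $b\in\mathcal B$ (note $Pb\in\mathcal F$). Weak B$'$-freeness of $((\mathcal A_i)_{i\in I},(\mathcal F_j)_{j\in J})$: the $\mathcal A_i$ are free w.r.t. $\varphi$ ($\varphi(c_1\cdots c_n)=0$ for alternating indices and centered $c_l\in\mathcal A_{i_l}$), and with $\mathcal A_0$ the algebra generated by all $\mathcal A_i$ and $\mathcal F_0$ the algebra generated by all $\mathcal F_j$, $\Phi(c_0g_1c_1\cdots c_{n-1}g_nc_n)=\varphi(c_0c_n)\prod_{l=1}^{n-1}\varphi(c_l)\Phi(g_1\cdots g_n)$ for all $n\ge1$, $c_l\in\mathcal A_0$, $g_l\in\mathcal F_0$. Subalgebras $(\mathcal C_i)$ (not necessarily unital) are Boolean independent w.r.t. a functional $\psi$ if $\psi(c_1\cdots c_n)=\psi(c_1)\cdots\psi(c_n)$ whenever $i_1\ne i_2\ne\cdots\ne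 i_n$, $c_l\in\mathcal C_{i_l}$. Unital subalgebras $(\mathcal B_i)$ are conditionally free w.r.t. $(\varphi,\psi)$ if they are free w.r.t. $\varphi$ and $\psi(b_1\cdots b_n)=\psi(b_1)\cdots\psi(b_n)$ whenever $n\ge1$, $i_1\ne\cdots\ne i_n$, $b_l\in\mathcal B_{i_l}$, $\varphi(b_l)=0$. *)

theory Defs
  imports Complex_Main
begin

definition cplx_alg :: "(complex \<Rightarrow> 'a::ring \<Rightarrow> 'a) \<Rightarrow> bool" where
  "cplx_alg sm \<longleftrightarrow>
     (\<forall>c x y. sm c (x + y) = sm c x + sm c y) \<and>
     (\<forall>c d x. sm (c + d) x = sm c x + sm d x) \<and>
     (\<forall>c d x. sm (c * d) x = sm c (sm d x)) \<and>
     (\<forall>x. sm 1 x = x) \<and>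
     (\<forall>c x y. sm c (x * y) = sm c x * y) \<and>
     (\<forall>c x y. sm c (x * y) = x * sm c y)"

definition cplx_linear :: "('a::ab_group_add \<Rightarrow> complex) \<Rightarrow> (complex \<Rightarrow> 'a \<Rightarrow> 'a) \<Rightarrow> bool" where
  "cplx_linear \<phi> sm \<longleftrightarrow> (\<forall>x y. \<phi> (x + y) = \<phi> x + \<phi> y) \<and> (\<forall>c x. \<phi> (sm c x) = c * \<phi> x)"

definition subalg :: "'b \<Rightarrow> ('b \<Rightarrow> 'b \<Rightarrow> 'b) \<Rightarrow> (complex \<Rightarrow> 'b \<Rightarrow> 'b) \<Rightarrow> ('b \<Rightarrow> 'b \<Rightarrow> 'b) \<Rightarrow> 'b set \<Rightarrow> bool" where
  "subalg z ad sm mu S \<longleftrightarrow> z \<in> S \<and> (\<forall>x\<in>S. \<forall>y\<in>S. ad x y \<in> S \<and> mu x y \<in> S) \<and> (\<forall>c. \<forall>x\<in>S. sm c x \<in> S)"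

inductive_set gen_alg :: "'b \<Rightarrow> ('b \<Rightarrow> 'b \<Rightarrow> 'b) \<Rightarrow> (complex \<Rightarrow> 'b \<Rightarrow> 'b) \<Rightarrow> ('b \<Rightarrow> 'b \<Rightarrow> 'b) \<Rightarrow> 'b set \<Rightarrow> 'b set"
  for z ad sm mu G where
  gen_base: "x \<in> G \<Longrightarrow> x \<in> gen_alg z ad sm mu G"
| gen_zero: "z \<in> gen_alg z ad sm mu G"
| gen_add: "x \<in> gen_alg z ad sm mu G \<Longrightarrow> y \<in> gen_alg z ad sm mu G \<Longrightarrow> ad x y \<in> gen_alg z ad sm mu G"
| gen_smul: "x \<in> gen_alg z ad sm mu G \<Longrightarrow> sm c x \<in> gen_alg z ad sm mu G"
| gen_mul: "x \<in> gen_alg z ad sm mu G \<Longrightarrow> y \<in> gen_alg z ad sm mu G \<Longrightarrow> mu x y \<in> gen_alg z ad sm mu G"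

text \<open>Freeness, Boolean independence, conditional freeness. A word is a list of
  (index, element) pairs; prodl multiplies a nonempty list of elements.\<close>
definition alternating :: "('i \<times> 'b) list \<Rightarrow> 'i set \<Rightarrow> ('i \<Rightarrow> 'b set) \<Rightarrow> bool" where
  "alternating xs I C \<longleftrightarrow> xs \<noteq> [] \<and> successively (\<noteq>) (map fst xs) \<and>
     (\<forall>(i, c) \<in> set xs. i \<in> I \<and> c \<in> C i)"

definition free_wrt :: "('b list \<Rightarrow> 'b) \<Rightarrow> ('b \<Rightarrow> complex) \<Rightarrow> ('i \<Rightarrow> 'b set) \<Rightarrow> 'i set \<Rightarrow> bool" where
  "free_wrt prodl \<phi> C I \<longleftrightarrow>
     (\<forall>xs. alternating xs I C \<longrightarrow> (\<forall>(i, c) \<in> set xs. \<phi> c = 0) \<longrightarrow> \<phi> (prodl (map snd xs)) = 0)"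

definition boolean_indep :: "('b list \<Rightarrow> 'b) \<Rightarrow> ('b \<Rightarrow> complex) \<Rightarrow> ('i \<Rightarrow> 'b set) \<Rightarrow> 'i set \<Rightarrow> bool" where
  "boolean_indep prodl \<psi> C I \<longleftrightarrow>
     (\<forall>xs. alternating xs I C \<longrightarrow> \<psi> (prodl (map snd xs)) = (\<Prod>x\<leftarrow>xs. \<psi> (snd x)))"

definition cond_free :: "('b list \<Rightarrow> 'b) \<Rightarrow> ('b \<Rightarrow> complex) \<Rightarrow> ('b \<Rightarrow> complex) \<Rightarrow> ('i \<Rightarrow> 'b set) \<Rightarrow> 'i set \<Rightarrow> bool" where
  "cond_free prodl \<phi> \<psi> C I \<longleftrightarrow> free_wrt prodl \<phi> C I \<and>
     (\<forall>xs. alternating xs I C \<longrightarrow> (\<forall>(i, c) \<in> set xs. \<phi> c = 0) \<longrightarrow>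
        \<psi> (prodl (map snd xs)) = (\<Prod>x\<leftarrow>xs. \<psi> (snd x)))"

text \<open>A: type 'a (unital ring) with scalar action smA; F: type 'f (non-unital ring) with scalar
  action smF; left/right actions lA, rA of A on F.\<close>
definition ncps_Bp ::
  "(complex \<Rightarrow> 'a::ring_1 \<Rightarrow> 'a) \<Rightarrow> ('a \<Rightarrow> complex) \<Rightarrow> (complex \<Rightarrow> 'f::ring \<Rightarrow> 'f) \<Rightarrow>
   ('a \<Rightarrow> 'f \<Rightarrow> 'f) \<Rightarrow> ('f \<Rightarrow> 'a \<Rightarrow> 'f) \<Rightarrow> ('f \<Rightarrow> complex) \<Rightarrow> bool" where
  "ncps_Bp smA \<phi> smF lA rA \<Phi> \<longleftrightarrow>
     cplx_alg smA \<and> cplx_alg smF \<and> cplx_linear \<phi> smA \<and> \<phi> 1 = 1 \<and> cplx_linear \<Phi> smF \<and>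
     \<comment> \<open>bimodule\<close>
     (\<forall>a b f. lA (a * b) f = lA a (lA b f)) \<and> (\<forall>f. lA 1 f = f) \<and>
     (\<forall>a b f. rA f (a * b) = rA (rA f a) b) \<and> (\<forall>f. rA f 1 = f) \<and>
     (\<forall>a b f. lA a (rA f b) = rA (lA a f) b) \<and>
     (\<forall>a b f. lA (a + b) f = lA a f + lA b f) \<and> (\<forall>a f g. lA a (f + g) = lA a f + lA a g) \<and>
     (\<forall>a b f. rA f (a + b) = rA f a + rA f b) \<and> (\<forall>a f g. rA (f + g) a = rA f a + rA g a) \<and>
     (\<forall>c a f. lA (smA c a) f = smF c (lA a f) \<and> lA a (smF c f) = smF c (lA a f)) \<and>
     (\<forall>c a f. rA f (smA c a) = smF c (rA f a) \<and> rA (smF c f) a = smF c (rA f a)) \<and>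
     \<comment> \<open>compatibility with the multiplication of F\<close>
     (\<forall>a f g. lA a (f * g) = lA a f * g) \<and>
     (\<forall>a f g. rA (f * g) a = f * rA g a) \<and>
     (\<forall>a f g. rA f a * g = f * lA a g)"

text \<open>The algebra B = A \<oplus> F, elements are pairs (a, f) standing for a + f.\<close>
definition badd :: "'a::ring_1 \<times> 'f::ring \<Rightarrow> 'a \<times> 'f \<Rightarrow> 'a \<times> 'f" where
  "badd x y = (fst x + fst y, snd x + snd y)"

definition bsm :: "(complex \<Rightarrow> 'a::ring_1 \<Rightarrow> 'a) \<Rightarrow> (complex \<Rightarrow> 'f::ring \<Rightarrow> 'f) \<Rightarrow> complex \<Rightarrow> 'a \<times> 'f \<Rightarrow> 'a \<times> 'f" where
  "bsm smA smF c x = (smA c (fst x), smF c (snd x))"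

definition bmul :: "('a::ring_1 \<Rightarrow> 'f::ring \<Rightarrow> 'f) \<Rightarrow> ('f \<Rightarrow> 'a \<Rightarrow> 'f) \<Rightarrow> 'a \<times> 'f \<Rightarrow> 'a \<times> 'f \<Rightarrow> 'a \<times> 'f" where
  "bmul lA rA x y = (fst x * fst y, lA (fst x) (snd y) + rA (snd x) (fst y) + snd x * snd y)"

definition bprod :: "('a::ring_1 \<Rightarrow> 'f::ring \<Rightarrow> 'f) \<Rightarrow> ('f \<Rightarrow> 'a \<Rightarrow> 'f) \<Rightarrow> ('a \<times> 'f) list \<Rightarrow> 'a \<times> 'f" where
  "bprod lA rA xs = foldr (bmul lA rA) xs (1, 0)"

text \<open>\<phi> on B, and \<phi>_P(b) = \<Phi>(P b) / \<Phi>(P).\<close>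
definition phiB :: "('a::ring_1 \<Rightarrow> complex) \<Rightarrow> 'a \<times> 'f::ring \<Rightarrow> complex" where
  "phiB \<phi> x = \<phi> (fst x)"

definition phiP :: "('a::ring_1 \<Rightarrow> 'f::ring \<Rightarrow> 'f) \<Rightarrow> ('f \<Rightarrow> 'a \<Rightarrow> 'f) \<Rightarrow> ('f \<Rightarrow> complex) \<Rightarrow> 'f \<Rightarrow> 'a \<times> 'f \<Rightarrow> complex" where
  "phiP lA rA \<Phi> P x = \<Phi> (snd (bmul lA rA (0, P) x)) / \<Phi> P"

fun fprod :: "'f::ring list \<Rightarrow> 'f" where
  "fprod [] = 0"
| "fprod [x] = x"
| "fprod (x # xs) = x * fprod xs"

text \<open>fpow P n = P^(n+1).\<close>
fun fpow :: "'f::ring \<Rightarrow> nat \<Rightarrow> 'f" where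
  "fpow P 0 = P"
| "fpow P (Suc n) = P * fpow P n"

definition FP :: "(complex \<Rightarrow> 'f::ring \<Rightarrow> 'f) \<Rightarrow> 'f \<Rightarrow> 'f set" where
  "FP smF P = {smF c (fpow P n) | c n. True}"

text \<open>The element g_1 c_1 g_2 c_2 ... g_n c_n of F, for a nonempty list of pairs (g_l, c_l).\<close>
fun gword :: "('f::ring \<Rightarrow> 'a::ring_1 \<Rightarrow> 'f) \<Rightarrow> ('f \<times> 'a) list \<Rightarrow> 'f" where
  "gword rA [] = 0"
| "gword rA [x] = rA (fst x) (snd x)"
| "gword rA (x # xs) = rA (fst x) (snd x) * gword rA xs"

definition weakly_Bp_free ::
  "(complex \<Rightarrow> 'a::ring_1 \<Rightarrow> 'a) \<Rightarrow> ('a \<Rightarrow> complex) \<Rightarrow> (complex \<Rightarrow> 'f::ring \<Rightarrow> 'f) \<Rightarrow>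
   ('a \<Rightarrow> 'f \<Rightarrow> 'f) \<Rightarrow> ('f \<Rightarrow> 'a \<Rightarrow> 'f) \<Rightarrow> ('f \<Rightarrow> complex) \<Rightarrow>
   ('i \<Rightarrow> 'a set) \<Rightarrow> 'i set \<Rightarrow> ('j \<Rightarrow> 'f set) \<Rightarrow> 'j set \<Rightarrow> bool" where
  "weakly_Bp_free smA \<phi> smF lA rA \<Phi> A I F J \<longleftrightarrow>
     free_wrt prod_list \<phi> A I \<and>
     (let A0 = gen_alg 0 (+) smA (*) (insert 1 (\<Union>i\<in>I. A i));
          F0 = gen_alg 0 (+) smF (*) (\<Union>j\<in>J. F j)
      in \<forall>c0 gs. gs \<noteq> [] \<longrightarrow> c0 \<in> A0 \<longrightarrow> (\<forall>x\<in>set gs. fst x \<in> F0 \<and> snd x \<in> A0) \<longrightarrow>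
           \<Phi> (lA c0 (gword rA gs)) =
             \<phi> (c0 * snd (last gs)) * (\<Prod>x\<leftarrow>butlast gs. \<phi> (snd x)) * \<Phi> (fprod (map fst gs)))"

end

theory Submission
  imports Defs
begin

locale T43 =
  fixes smA :: "complex \<Rightarrow> 'a::ring_1 \<Rightarrow> 'a" and phi :: "'a \<Rightarrow> complex"
    and smF :: "complex \<Rightarrow> 'f::ring \<Rightarrow> 'f" and lA :: "'a \<Rightarrow> 'f \<Rightarrow> 'f" and rA :: "'f \<Rightarrow> 'a \<Rightarrow> 'f"
    and Phi :: "'f \<Rightarrow> complex"
    and I :: "'i set" and A :: "'i \<Rightarrow> 'a set" and F :: "'i \<Rightarrow> 'f set" and P :: 'f
  assumes ncps: "ncps_Bp smA phi smF lA rA Phi"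
    and subA: "\<And>i. i \<in> I \<Longrightarrow> subalg 0 (+) smA (*) (A i) \<and> 1 \<in> A i"
    and subF: "\<And>i. i \<in> I \<Longrightarrow> subalg 0 (+) smF (*) (F i)"
    and PhiP: "Phi P \<noteq> 0"
    and wfree: "weakly_Bp_free smA phi smF lA rA Phi A I
                  (\<lambda>j. case j of None \<Rightarrow> FP smF P | Some i \<Rightarrow> F i) (insert None (Some ` I))"
begin

lemma smA_add: "smA c (x + y) = smA c x + smA c y"
  and smA_distr: "smA (c + d) x = smA c x + smA d x"
  and smA_mult: "smA (c * d) x = smA c (smA d x)"
  and smA_one: "smA 1 x = x"
  and smA_mulL: "smA c (x * y) = smA c x * y"
  and smA_mulR: "smA c (x * y) = x * smA c y"
  using ncps unfolding ncps_Bp_def cplx_alg_def by auto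

lemma smF_add: "smF c (x + y) = smF c x + smF c y"
  and smF_distr: "smF (c + d) x = smF c x + smF d x"
  and smF_mult: "smF (c * d) x = smF c (smF d x)"
  and smF_one: "smF 1 x = x"
  and smF_mulL: "smF c (x * y) = smF c x * y"
  and smF_mulR: "smF c (x * y) = x * smF c y"
  using ncps unfolding ncps_Bp_def cplx_alg_def by auto

lemma phi_add: "phi (x + y) = phi x + phi y"
  and phi_sm: "phi (smA c x) = c * phi x"
  and phi_one: "phi 1 = 1"
  and Phi_add: "Phi (f + g) = Phi f + Phi g"
  and Phi_sm: "Phi (smF c f) = c * Phi f"
  using ncps unfolding ncps_Bp_def cplx_linear_def by auto

lemma lA_mult: "lA (a * b) f = lA a (lA b f)"
  and lA_one: "lA 1 f = f"
  and rA_mult: "rA f (a * b) = rA (rA f a) b"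
  and rA_one: "rA f 1 = f"
  and lA_rA: "lA a (rA f b) = rA (lA a f) b"
  and lA_addL: "lA (a + b) f = lA a f + lA b f"
  and lA_addR: "lA a (f + g) = lA a f + lA a g"
  and rA_addR: "rA f (a + b) = rA f a + rA f b"
  and rA_addL: "rA (f + g) a = rA f a + rA g a"
  and lA_smA: "lA (smA c a) f = smF c (lA a f)"
  and lA_smF: "lA a (smF c f) = smF c (lA a f)"
  and rA_smA: "rA f (smA c a) = smF c (rA f a)"
  and rA_smF: "rA (smF c f) a = smF c (rA f a)"
  and lA_mulF: "lA a (f * g) = lA a f * g"
  and rA_mulF: "rA (f * g) a = f * rA g a"
  and rA_lA: "rA f a * g = f * lA a g"
  using ncps unfolding ncps_Bp_def by auto

lemma lA_zero1[simp]: "lA 0 f = 0"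
  using lA_addL[of 0 0 f] by simp
lemma lA_zero2[simp]: "lA a 0 = 0"
  using lA_addR[of a 0 0] by simp
lemma rA_zero1[simp]: "rA 0 a = 0"
  using rA_addL[of 0 0 a] by simp
lemma rA_zero2[simp]: "rA f 0 = 0"
  using rA_addR[of f 0 0] by simp
lemma Phi_zero[simp]: "Phi 0 = 0"
  using Phi_add[of 0 0] by simp
lemma phi_zero[simp]: "phi 0 = 0"
  using phi_add[of 0 0] by simp
lemma smF_zero[simp]: "smF c 0 = 0"
  using smF_add[of c 0 0] by simp
lemma smA_zero[simp]: "smA c 0 = 0"
  using smA_add[of c 0 0] by simp
lemma smA_zero_scal: "smA 0 x = 0"
  using smA_distr[of 0 0 x] by simp
lemma smA_neg: "smA (-1) x = - x"
proof -
  have "smA (-1) x + smA 1 x = smA 0 x" using smA_distr[of "-1" 1 x] by simp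
  then show ?thesis using smA_zero_scal smA_one by (simp add: add_eq_0_iff2)
qed
lemma phi_diff: "phi (x - y) = phi x - phi y"
  using phi_add[of "x - y" y] by simp
lemma Phi_sum_list: "Phi (sum_list xs) = (\<Sum>x\<leftarrow>xs. Phi x)"
  by (induction xs) (auto simp: Phi_add)
lemma lA_sum_list: "lA a (sum_list xs) = (\<Sum>x\<leftarrow>xs. lA a x)"
  by (induction xs) (auto simp: lA_addR)
lemma rA_sum_list: "rA (sum_list xs) a = (\<Sum>x\<leftarrow>xs. rA x a)"
  by (induction xs) (auto simp: rA_addL)
lemma smF_sum_list: "smF c (sum_list xs) = (\<Sum>x\<leftarrow>xs. smF c x)"
  by (induction xs) (auto simp: smF_add)
lemma smA1_mul: "smA c 1 * x = smA c x"
  using smA_mulL[of c 1 x] by simp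
lemma mul_smA1: "x * smA c 1 = smA c x"
  using smA_mulR[of c x 1] by simp

lemma subA_closed:
  assumes "i \<in> I"
  shows "0 \<in> A i" "1 \<in> A i" "x \<in> A i \<Longrightarrow> y \<in> A i \<Longrightarrow> x + y \<in> A i"
    "x \<in> A i \<Longrightarrow> y \<in> A i \<Longrightarrow> x * y \<in> A i" "x \<in> A i \<Longrightarrow> smA c x \<in> A i"
  using subA[OF assms] unfolding subalg_def by auto

lemma subA_diff: "i \<in> I \<Longrightarrow> x \<in> A i \<Longrightarrow> y \<in> A i \<Longrightarrow> x - y \<in> A i"
  using subA_closed[of i] smA_neg[of y] by (metis diff_conv_add_uminus)

lemma subF_closed:
  assumes "i \<in> I"
  shows "0 \<in> F i" "x \<in> F i \<Longrightarrow> y \<in> F i \<Longrightarrow> x + y \<in> F i"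
    "x \<in> F i \<Longrightarrow> y \<in> F i \<Longrightarrow> x * y \<in> F i" "x \<in> F i \<Longrightarrow> smF c x \<in> F i"
  using subF[OF assms] unfolding subalg_def by auto

definition A0 where "A0 = gen_alg 0 (+) smA (*) (insert 1 (\<Union>i\<in>I. A i))"
definition F0 where "F0 = gen_alg 0 (+) smF (*)
   (\<Union>j\<in>insert None (Some ` I). (case j of None \<Rightarrow> FP smF P | Some i \<Rightarrow> F i))"

lemma A0_one: "1 \<in> A0" unfolding A0_def by (rule gen_base) simp
lemma A0_base: "i \<in> I \<Longrightarrow> x \<in> A i \<Longrightarrow> x \<in> A0" unfolding A0_def by (rule gen_base) auto
lemma A0_mul: "x \<in> A0 \<Longrightarrow> y \<in> A0 \<Longrightarrow> x * y \<in> A0" unfolding A0_def by (rule gen_mul)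
lemma F0_base: "i \<in> I \<Longrightarrow> x \<in> F i \<Longrightarrow> x \<in> F0" unfolding F0_def by (rule gen_base) auto
lemma F0_P: "P \<in> F0" unfolding F0_def
proof (rule gen_base)
  have "P \<in> FP smF P" unfolding FP_def using smF_one[of P] by (metis (mono_tags, lifting) fpow.simps(1) mem_Collect_eq)
  then show "P \<in> (\<Union>j\<in>insert None (Some ` I). case j of None \<Rightarrow> FP smF P | Some i \<Rightarrow> F i)" by auto
qed

definition wvalid :: "('f \<times> 'a) list \<Rightarrow> bool" where
  "wvalid gs \<longleftrightarrow> (\<forall>x\<in>set gs. fst x \<in> F0 \<and> snd x \<in> A0)"

lemma prod_list_butlast_last: assumes "xs \<noteq> []" shows "(\<Prod>x\<leftarrow>xs. f x) = (\<Prod>x\<leftarrow>butlast xs. f x) * f (last xs)"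
proof -
  have "(\<Prod>x\<leftarrow>xs. f x) = (\<Prod>x\<leftarrow>butlast xs @ [last xs]. f x)"
    using append_butlast_last_id[OF assms] by simp
  then show ?thesis by simp
qed

lemma wf_formula:
  assumes "gs \<noteq> []" "wvalid gs"
  shows "Phi (gword rA gs) = (\<Prod>x\<leftarrow>gs. phi (snd x)) * Phi (fprod (map fst gs))"
proof -
  have "Phi (lA 1 (gword rA gs)) = phi (1 * snd (last gs)) * (\<Prod>x\<leftarrow>butlast gs. phi (snd x)) * Phi (fprod (map fst gs))"
    using wfree assms A0_one unfolding weakly_Bp_free_def Let_def A0_def[symmetric] F0_def[symmetric] wvalid_def
  proof -
    have "\<forall>c0 gs. gs \<noteq> [] \<longrightarrow> c0 \<in> A0 \<longrightarrow> (\<forall>x\<in>set gs. fst x \<in> F0 \<and> snd x \<in> A0) \<longrightarrow>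
           Phi (lA c0 (gword rA gs)) =
             phi (c0 * snd (last gs)) * (\<Prod>x\<leftarrow>butlast gs. phi (snd x)) * Phi (fprod (map fst gs))"
      using wfree unfolding weakly_Bp_free_def Let_def A0_def F0_def by blast
    then show ?thesis using assms A0_one unfolding wvalid_def by blast
  qed
  then show ?thesis using prod_list_butlast_last[OF assms(1), of "\<lambda>x. phi (snd x)"] lA_one
    by (simp add: mult.commute)
qed

lemma gword_Cons: "xs \<noteq> [] \<Longrightarrow> gword rA (x # xs) = rA (fst x) (snd x) * gword rA xs"
  by (cases xs) auto

lemma gword_append: "xs \<noteq> [] \<Longrightarrow> ys \<noteq> [] \<Longrightarrow> gword rA (xs @ ys) = gword rA xs * gword rA ys"
proof (induction xs)
  case Nil then show ?case by simp
next
  case (Cons x xs)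
  show ?case
  proof (cases "xs = []")
    case True then show ?thesis using Cons gword_Cons[of ys x] by simp
  next
    case False then show ?thesis using Cons gword_Cons[of "xs @ ys" x] gword_Cons[of xs x]
      by (simp add: mult.assoc)
  qed
qed

lemma fprod_Cons: "xs \<noteq> [] \<Longrightarrow> fprod (x # xs) = x * fprod xs"
  by (cases xs) auto

lemma fprod_append: "xs \<noteq> [] \<Longrightarrow> ys \<noteq> [] \<Longrightarrow> fprod (xs @ ys) = fprod xs * fprod ys"
proof (induction xs)
  case Nil then show ?case by simp
next
  case (Cons x xs)
  show ?case
  proof (cases "xs = []")
    case True then show ?thesis using Cons fprod_Cons[of ys x] by simp
  next
    case False then show ?thesis using Cons fprod_Cons[of "xs @ ys" x] fprod_Cons[of xs x]
      by (simp add: mult.assoc)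
  qed
qed

lemma gword_snoc_rA: "rA (gword rA (gs @ [(g, c)])) a = gword rA (gs @ [(g, c * a)])"
proof (induction gs)
  case Nil then show ?case by (simp add: rA_mult)
next
  case (Cons x gs)
  then show ?case using gword_Cons[of "gs @ [(g, c)]" x] gword_Cons[of "gs @ [(g, c * a)]" x]
    by (simp add: rA_mulF)
qed

lemma gword_snoc_mul_lA:
  assumes "gs' \<noteq> []"
  shows "gword rA (gs @ [(g, c)]) * lA c' (gword rA gs') = gword rA (gs @ [(g, c * c')] @ gs')"
proof -
  have base: "rA g c * lA c' (gword rA gs') = gword rA ((g, c * c') # gs')"
    using rA_lA[of "rA g c" c' "gword rA gs'"] gword_Cons[OF assms, of "(g, c * c')"]
    by (simp add: rA_mult)
  show ?thesis
  proof (cases "gs = []")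
    case True then show ?thesis using base by simp
  next
    case False
    have "gword rA (gs @ [(g, c)]) * lA c' (gword rA gs') = gword rA gs * (rA g c * lA c' (gword rA gs'))"
      using gword_append[OF False, of "[(g,c)]"] by (simp add: mult.assoc)
    also have "\<dots> = gword rA (gs @ [(g, c * c')] @ gs')"
      using base gword_append[OF False, of "(g, c * c') # gs'"] by simp
    finally show ?thesis .
  qed
qed

definition altc :: "('i \<times> 'a) list \<Rightarrow> bool" where
  "altc ch \<longleftrightarrow> successively (\<noteq>) (map fst ch) \<and> (\<forall>(i, a)\<in>set ch. i \<in> I \<and> a \<in> A i \<and> phi a = 0)"

definition okx :: "'a \<Rightarrow> 'i \<Rightarrow> bool" where
  "okx x k \<longleftrightarrow> x = 1 \<or> (\<exists>j\<in>I. j \<noteq> k \<and> x \<in> A j)"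

lemma okx_A0: "okx x k \<Longrightarrow> x \<in> A0"
  unfolding okx_def using A0_one A0_base by auto

lemma free_A: "free_wrt prod_list phi A I"
  using wfree unfolding weakly_Bp_free_def by simp

lemma free0: "ch \<noteq> [] \<Longrightarrow> altc ch \<Longrightarrow> phi (prod_list (map snd ch)) = 0"
  using free_A unfolding free_wrt_def alternating_def altc_def by fastforce

lemma centered: "i \<in> I \<Longrightarrow> y \<in> A i \<Longrightarrow> y - smA (phi y) 1 \<in> A i \<and> phi (y - smA (phi y) 1) = 0"
  using subA_diff[of i y "smA (phi y) 1"] subA_closed[of i] by (simp add: phi_diff phi_sm phi_one)

lemma decomp: "y = smA (phi y) 1 + (y - smA (phi y) 1)" by simp

lemma altc_snoc: "altc ch \<Longrightarrow> j \<in> I \<Longrightarrow> y \<in> A j \<Longrightarrow> phi y = 0 \<Longrightarrow> (ch \<noteq> [] \<Longrightarrow> fst (last ch) \<noteq> j)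
   \<Longrightarrow> altc (ch @ [(j, y)])"
  unfolding altc_def by (auto simp: successively_append_iff last_map)

lemma altc_Cons: "altc ch \<Longrightarrow> j \<in> I \<Longrightarrow> y \<in> A j \<Longrightarrow> phi y = 0 \<Longrightarrow> (ch \<noteq> [] \<Longrightarrow> fst (hd ch) \<noteq> j)
   \<Longrightarrow> altc ((j, y) # ch)"
  unfolding altc_def by (cases ch) auto

lemma H1:
  assumes "ch \<noteq> []" "altc ch" "okx y (fst (last ch))"
  shows "phi (prod_list (map snd ch) * y) = 0"
proof (cases "y = 1")
  case True then show ?thesis using free0 assms by simp
next
  case False
  then obtain j where j: "j \<in> I" "j \<noteq> fst (last ch)" "y \<in> A j" using assms(3) unfolding okx_def by auto
  define y0 where "y0 = y - smA (phi y) 1"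
  have y0: "y0 \<in> A j" "phi y0 = 0" using centered[OF j(1,3)] y0_def by auto
  have "prod_list (map snd ch) * y = smA (phi y) (prod_list (map snd ch)) + prod_list (map snd (ch @ [(j, y0)]))"
    by (simp add: y0_def algebra_simps mul_smA1)
  moreover have "phi (prod_list (map snd (ch @ [(j, y0)]))) = 0"
    using free0[of "ch @ [(j, y0)]"] altc_snoc[OF assms(2) j(1) y0] j(2) by simp
  ultimately show ?thesis using free0[OF assms(1,2)] by (simp add: phi_add phi_sm)
qed

lemma H2:
  assumes "ch \<noteq> []" "altc ch" "okx x (fst (hd ch))" "okx y (fst (last ch))"
  shows "phi (x * prod_list (map snd ch) * y) = 0"
proof (cases "x = 1")
  case True then show ?thesis using H1 assms by simp
next
  case False
  then obtain j where j: "j \<in> I" "j \<noteq> fst (hd ch)" "x \<in> A j" using assms(3) unfolding okx_def by auto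
  define x0 where "x0 = x - smA (phi x) 1"
  have x0: "x0 \<in> A j" "phi x0 = 0" using centered[OF j(1,3)] x0_def by auto
  have "x * prod_list (map snd ch) * y = smA (phi x) (prod_list (map snd ch) * y) + prod_list (map snd ((j, x0) # ch)) * y"
    by (simp add: x0_def algebra_simps smA1_mul smA_mulL)
  moreover have "phi (prod_list (map snd ((j, x0) # ch)) * y) = 0"
    using H1[of "(j, x0) # ch" y] altc_Cons[OF assms(2) j(1) x0] j(2) assms(1,4) by simp
  ultimately show ?thesis using H1[OF assms(1,2,4)] by (simp add: phi_add phi_sm)
qed

lemma pairfree:
  assumes "okx x i" "i \<in> I" "c \<in> A i"
  shows "phi (x * c) = phi x * phi c"
proof (cases "x = 1")
  case True then show ?thesis by (simp add: phi_one)
next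
  case False
  then obtain j where j: "j \<in> I" "j \<noteq> i" "x \<in> A j" using assms(1) unfolding okx_def by auto
  define x0 where "x0 = x - smA (phi x) 1"
  have x0: "x0 \<in> A j" "phi x0 = 0" using centered[OF j(1,3)] x0_def by auto
  have "x * c = smA (phi x) c + prod_list (map snd [(j, x0)]) * c"
    by (simp add: x0_def algebra_simps smA1_mul)
  moreover have "phi (prod_list (map snd [(j, x0)]) * c) = 0"
  proof -
    have "okx c j" using assms j unfolding okx_def by auto
    moreover have "altc [(j, x0)]" using x0 j unfolding altc_def by auto
    ultimately show ?thesis using H1[of "[(j, x0)]" c] by simp
  qed
  ultimately show ?thesis by (simp add: phi_add phi_sm)
qed

definition mval :: "'a \<times> ('f \<times> 'a) list \<Rightarrow> 'f" where
  "mval m = lA (fst m) (gword rA (snd m))"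
definition mvalid :: "'i \<Rightarrow> 'a \<times> ('f \<times> 'a) list \<Rightarrow> bool" where
  "mvalid i m \<longleftrightarrow> fst m \<in> A i \<and> snd m \<noteq> [] \<and> (\<forall>x\<in>set (snd m). fst x \<in> F i \<and> snd x \<in> A i)"
definition val :: "('a \<times> ('f \<times> 'a) list) list \<Rightarrow> 'f" where
  "val ms = sum_list (map mval ms)"
definition Wv :: "'i \<Rightarrow> ('a \<times> ('f \<times> 'a) list) list \<Rightarrow> bool" where
  "Wv i ms \<longleftrightarrow> (\<forall>m\<in>set ms. mvalid i m)"
definition W :: "'i \<Rightarrow> 'f set" where
  "W i = {f. \<exists>ms. Wv i ms \<and> f = val ms}"

lemma W_zero: "0 \<in> W i"
  unfolding W_def by (rule CollectI, rule exI[of _ "[]"]) (simp add: Wv_def val_def)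

lemma W_base: assumes "i \<in> I" "f \<in> F i" shows "f \<in> W i"
  unfolding W_def
proof (rule CollectI, rule exI[of _ "[(1, [(f, 1)])]"])
  show "Wv i [(1, [(f, 1)])] \<and> f = val [(1, [(f, 1)])]"
    using assms subA_closed[OF assms(1)] by (simp add: Wv_def mvalid_def val_def mval_def lA_one rA_one)
qed

lemma W_add: assumes "f \<in> W i" "g \<in> W i" shows "f + g \<in> W i"
proof -
  obtain ms ms' where "Wv i ms" "f = val ms" "Wv i ms'" "g = val ms'" using assms unfolding W_def by auto
  then show ?thesis unfolding W_def by (intro CollectI exI[of _ "ms @ ms'"]) (auto simp: Wv_def val_def)
qed

lemma W_sm: assumes "i \<in> I" "f \<in> W i" shows "smF c f \<in> W i"
proof -
  obtain ms where ms: "Wv i ms" "f = val ms" using assms unfolding W_def by auto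
  let ?ms = "map (\<lambda>m. (smA c (fst m), snd m)) ms"
  have "val ?ms = smF c (val ms)"
    unfolding val_def by (induction ms) (auto simp: mval_def lA_smA smF_add)
  moreover have "Wv i ?ms" using ms subA_closed[OF assms(1)] by (auto simp: Wv_def mvalid_def)
  ultimately show ?thesis using ms unfolding W_def by auto
qed

lemma W_lA: assumes "i \<in> I" "a \<in> A i" "f \<in> W i" shows "lA a f \<in> W i"
proof -
  obtain ms where ms: "Wv i ms" "f = val ms" using assms unfolding W_def by auto
  let ?ms = "map (\<lambda>m. (a * fst m, snd m)) ms"
  have "val ?ms = lA a (val ms)"
    unfolding val_def by (induction ms) (auto simp: mval_def lA_mult lA_addR)
  moreover have "Wv i ?ms" using ms assms subA_closed[OF assms(1)] by (auto simp: Wv_def mvalid_def)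
  ultimately show ?thesis using ms unfolding W_def by auto
qed

definition mr :: "'a \<Rightarrow> 'a \<times> ('f \<times> 'a) list \<Rightarrow> 'a \<times> ('f \<times> 'a) list" where
  "mr a m = (fst m, butlast (snd m) @ [(fst (last (snd m)), snd (last (snd m)) * a)])"

lemma mval_mr: assumes "snd m \<noteq> []" shows "mval (mr a m) = rA (mval m) a"
proof -
  have h: "rA (gword rA (snd m)) a = gword rA (butlast (snd m) @ [(fst (last (snd m)), snd (last (snd m)) * a)])"
    using gword_snoc_rA[of "butlast (snd m)" "fst (last (snd m))" "snd (last (snd m))" a]
    unfolding prod.collapse append_butlast_last_id[OF assms] .
  show ?thesis unfolding mval_def mr_def using h lA_rA[of "fst m" "gword rA (snd m)" a] by simp
qed

lemma mvalid_mr: assumes "i \<in> I" "mvalid i m" "a \<in> A i" shows "mvalid i (mr a m)"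
proof -
  have b: "\<forall>x\<in>set (butlast (snd m)). fst x \<in> F i \<and> snd x \<in> A i"
    using assms(2) in_set_butlastD unfolding mvalid_def by metis
  have l: "last (snd m) \<in> set (snd m)" using assms(2) last_in_set unfolding mvalid_def by blast
  then have "fst (last (snd m)) \<in> F i" "snd (last (snd m)) * a \<in> A i"
    using assms subA_closed(4)[OF assms(1)] unfolding mvalid_def by blast+
  then show ?thesis using b assms(2) unfolding mvalid_def mr_def by simp
qed

lemma W_rA: assumes "i \<in> I" "a \<in> A i" "f \<in> W i" shows "rA f a \<in> W i"
proof -
  obtain ms where ms: "Wv i ms" "f = val ms" using assms unfolding W_def by auto
  let ?ms = "map (mr a) ms"
  have "val ?ms = rA (val ms) a" using ms(1)
    unfolding val_def by (induction ms) (auto simp: mval_mr rA_addL Wv_def mvalid_def)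
  moreover have "Wv i ?ms" using ms assms mvalid_mr by (auto simp: Wv_def)
  ultimately show ?thesis using ms unfolding W_def by auto
qed

definition mmul :: "'a \<times> ('f \<times> 'a) list \<Rightarrow> 'a \<times> ('f \<times> 'a) list \<Rightarrow> 'a \<times> ('f \<times> 'a) list" where
  "mmul m m' = (fst m, butlast (snd m) @ [(fst (last (snd m)), snd (last (snd m)) * fst m')] @ snd m')"

lemma mval_mmul: assumes "snd m \<noteq> []" "snd m' \<noteq> []" shows "mval (mmul m m') = mval m * mval m'"
proof -
  have e: "snd m = butlast (snd m) @ [(fst (last (snd m)), snd (last (snd m)))]"
    using append_butlast_last_id[OF assms(1)] by simp
  have "mval m * mval m' = lA (fst m) (gword rA (snd m) * lA (fst m') (gword rA (snd m')))"
    unfolding mval_def by (simp add: lA_mulF)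
  also have "\<dots> = mval (mmul m m')"
    using gword_snoc_mul_lA[OF assms(2), of "butlast (snd m)" "fst (last (snd m))" "snd (last (snd m))" "fst m'"] e
    unfolding mval_def mmul_def by (metis fst_conv snd_conv)
  finally show ?thesis by simp
qed

lemma mvalid_mmul: assumes "i \<in> I" "mvalid i m" "mvalid i m'" shows "mvalid i (mmul m m')"
proof -
  have b: "\<forall>x\<in>set (butlast (snd m)). fst x \<in> F i \<and> snd x \<in> A i"
    using assms(2) in_set_butlastD unfolding mvalid_def by metis
  have l: "last (snd m) \<in> set (snd m)" using assms(2) last_in_set unfolding mvalid_def by blast
  then have "fst (last (snd m)) \<in> F i" "snd (last (snd m)) * fst m' \<in> A i"
    using assms subA_closed(4)[OF assms(1)] unfolding mvalid_def by blast+
  then show ?thesis using b assms(2,3) unfolding mvalid_def mmul_def by (simp add: ball_Un)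
qed

lemma W_mul: assumes "i \<in> I" "f \<in> W i" "g \<in> W i" shows "f * g \<in> W i"
proof -
  obtain ms ms' where ms: "Wv i ms" "f = val ms" "Wv i ms'" "g = val ms'" using assms unfolding W_def by auto
  let ?ms = "concat (map (\<lambda>m. map (mmul m) ms') ms)"
  have 1: "val (map (mmul m) ms') = mval m * val ms'" if "snd m \<noteq> []" for m
    using ms(3) unfolding val_def
  proof (induction ms')
    case Nil then show ?case by simp
  next
    case (Cons m' ms')
    then have "snd m' \<noteq> []" "Wv i ms'" by (auto simp: Wv_def mvalid_def)
    then show ?case using Cons mval_mmul[OF that \<open>snd m' \<noteq> []\<close>] by (simp add: distrib_left)
  qed
  have "val ?ms = val ms * val ms'" using ms(1)
  proof (induction ms)
    case Nil then show ?case by (simp add: val_def)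
  next
    case (Cons m ms)
    then have "snd m \<noteq> []" "Wv i ms" by (auto simp: Wv_def mvalid_def)
    then show ?case using Cons 1[of m] by (simp add: val_def distrib_right)
  qed
  moreover have "Wv i ?ms" using ms mvalid_mmul[OF assms(1)] by (auto simp: Wv_def)
  ultimately show ?thesis using ms unfolding W_def by auto
qed

lemma B_sub:
  assumes "x \<in> gen_alg (0, 0) badd (bsm smA smF) (bmul lA rA) {(a, f). a \<in> A i \<and> f \<in> F i}" "i \<in> I"
  shows "fst x \<in> A i \<and> snd x \<in> W i"
  using assms(1)
proof (induction rule: gen_alg.induct)
  case (gen_base x) then show ?case using W_base[OF assms(2)] by auto
next
  case gen_zero then show ?case using W_zero subA_closed[OF assms(2)] by simp
next
  case (gen_add x y) then show ?case using W_add subA_closed[OF assms(2)] by (simp add: badd_def)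
next
  case (gen_smul x c) then show ?case using W_sm[OF assms(2)] subA_closed[OF assms(2)] by (simp add: bsm_def)
next
  case (gen_mul x y) then show ?case
    using W_add W_mul[OF assms(2)] W_lA[OF assms(2)] W_rA[OF assms(2)] subA_closed[OF assms(2)]
    by (simp add: bmul_def)
qed

definition meps :: "'a \<times> ('f \<times> 'a) list \<Rightarrow> 'f" where
  "meps m = smF (phi (fst m) * (\<Prod>x\<leftarrow>snd m. phi (snd x))) (fprod (map fst (snd m)))"
definition eps :: "('a \<times> ('f \<times> 'a) list) list \<Rightarrow> 'f" where
  "eps ms = sum_list (map meps ms)"

lemma fprod_F: "i \<in> I \<Longrightarrow> (\<forall>x\<in>set xs. x \<in> F i) \<Longrightarrow> fprod xs \<in> F i"
  by (induction xs rule: fprod.induct) (auto simp: subF_closed)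

lemma eps_F: assumes "i \<in> I" "Wv i ms" shows "eps ms \<in> F i"
  using assms(2) unfolding eps_def
proof (induction ms)
  case Nil then show ?case using subF_closed[OF assms(1)] by simp
next
  case (Cons m ms)
  then have "meps m \<in> F i" using fprod_F[OF assms(1), of "map fst (snd m)"] subF_closed[OF assms(1)]
    unfolding meps_def Wv_def mvalid_def by auto
  then show ?case using Cons subF_closed[OF assms(1)] by (auto simp: Wv_def)
qed

lemma bmul_assoc: "bmul lA rA (bmul lA rA x y) z = bmul lA rA x (bmul lA rA y z)"
  by (simp add: bmul_def lA_addR rA_addL lA_mult rA_mult lA_rA lA_mulF rA_mulF rA_lA
      distrib_left distrib_right mult.assoc add_ac)

lemma bprod_Cons: "bprod lA rA (x # xs) = bmul lA rA x (bprod lA rA xs)"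
  by (simp add: bprod_def)

lemma fst_bprod: "fst (bprod lA rA xs) = prod_list (map fst xs)"
  by (induction xs) (auto simp: bprod_def bmul_def)

lemma snd_bmul0: "snd (bmul lA rA (0, u) y) = rA u (fst y) + u * snd y"
  by (simp add: bmul_def)

lemma bmul0: "bmul lA rA (0, u) (a, f) = (0, rA u a + u * f)"
  by (simp add: bmul_def)

definition Q :: "'a \<times> 'f \<Rightarrow> 'f \<Rightarrow> complex" where
  "Q R u = Phi (rA u (fst R) + u * snd R)"

lemma Q_add: "Q R (u + v) = Q R u + Q R v"
  unfolding Q_def by (simp add: rA_addL distrib_right Phi_add[symmetric] add_ac)

lemma Q_sum_list: "Q R (sum_list xs) = (\<Sum>x\<leftarrow>xs. Q R x)"
  by (induction xs) (auto simp: Q_add, simp add: Q_def)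

lemma altc_tl: "altc (x # ch) \<Longrightarrow> altc ch"
  by (cases ch) (auto simp: altc_def)

lemma prodch_A0: "altc ch \<Longrightarrow> prod_list (map snd ch) \<in> A0"
proof (induction ch)
  case Nil then show ?case by (simp add: A0_one)
next
  case (Cons x ch)
  then have "prod_list (map snd ch) \<in> A0" using altc_tl by blast
  moreover have "snd x \<in> A0" using Cons.prems A0_base unfolding altc_def by (cases x) auto
  ultimately show ?case by (simp add: A0_mul)
qed

definition bB :: "'i \<times> 'a \<times> ('a \<times> ('f \<times> 'a) list) list \<Rightarrow> 'a \<times> 'f" where
  "bB t = (fst (snd t), val (snd (snd t)))"
definition bE :: "'i \<times> 'a \<times> ('a \<times> ('f \<times> 'a) list) list \<Rightarrow> 'f \<times> 'a" where
  "bE t = (eps (snd (snd t)), 1)"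
definition bvalid :: "('i \<times> 'a \<times> ('a \<times> ('f \<times> 'a) list) list) list \<Rightarrow> bool" where
  "bvalid bs \<longleftrightarrow> successively (\<noteq>) (map fst bs) \<and>
     (\<forall>t\<in>set bs. fst t \<in> I \<and> fst (snd t) \<in> A (fst t) \<and> phi (fst (snd t)) = 0 \<and> Wv (fst t) (snd (snd t)))"

lemma E_valid: "bvalid bs \<Longrightarrow> wvalid (map bE bs)"
  unfolding bvalid_def wvalid_def bE_def using eps_F F0_base A0_one by auto

lemma prod_E: "(\<Prod>x\<leftarrow>map bE bs. phi (snd x)) = 1"
  by (induction bs) (auto simp: bE_def phi_one)

lemma prod_E': "prod_list (map ((\<lambda>x. phi (snd x)) \<circ> bE) bs) = 1"
  using prod_E[of bs] by simp

lemma mvalid_w: "i \<in> I \<Longrightarrow> mvalid i m \<Longrightarrow> wvalid (snd m)"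
  unfolding mvalid_def wvalid_def using F0_base A0_base by blast

lemma wvalid_append[simp]: "wvalid (xs @ ys) \<longleftrightarrow> wvalid xs \<and> wvalid ys"
  unfolding wvalid_def by auto

lemma wvalid_Cons[simp]: "wvalid (x # ys) \<longleftrightarrow> fst x \<in> F0 \<and> snd x \<in> A0 \<and> wvalid ys"
  unfolding wvalid_def by auto

lemma wvalid_Nil[simp]: "wvalid []"
  unfolding wvalid_def by auto

lemma fprod_subst:
  assumes "U \<noteq> []" "Gm \<noteq> []"
  shows "fprod (U @ fprod Gm # Es) = fprod (U @ Gm @ Es)"
proof (cases "Es = []")
  case True then show ?thesis using fprod_append[OF assms] fprod_append[OF assms(1), of "[fprod Gm]"] by simp
next
  case False
  have "fprod (U @ fprod Gm # Es) = fprod U * (fprod Gm * fprod Es)"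
    using fprod_append[OF assms(1), of "fprod Gm # Es"] fprod_Cons[OF False] by simp
  also have "\<dots> = fprod (U @ Gm @ Es)"
    using fprod_append[OF assms(1), of "Gm @ Es"] fprod_append[OF assms(2) False] assms by simp
  finally show ?thesis .
qed

lemma fprod_mid:
  assumes "U \<noteq> []"
  shows "fprod (U @ e # Es) = (if Es = [] then fprod U * e else fprod U * e * fprod Es)"
proof (cases "Es = []")
  case True then show ?thesis using fprod_append[OF assms, of "[e]"] by simp
next
  case False then show ?thesis
    using fprod_append[OF assms, of "e # Es"] fprod_Cons[OF False, of e] by (simp add: mult.assoc)
qed

lemma h_lin:
  assumes "U \<noteq> []"
  shows "Phi (fprod (U @ (e1 + e2) # Es)) = Phi (fprod (U @ e1 # Es)) + Phi (fprod (U @ e2 # Es))"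
    "Phi (fprod (U @ smF c e # Es)) = c * Phi (fprod (U @ e # Es))"
    "Phi (fprod (U @ 0 # Es)) = 0"
  unfolding fprod_mid[OF assms]
  by (auto simp: distrib_left distrib_right Phi_add smF_mulL[symmetric] smF_mulR[symmetric] Phi_sm)

lemma h_eps:
  assumes "U \<noteq> []" "\<forall>m\<in>set ms. snd m \<noteq> []"
  shows "Phi (fprod (U @ eps ms # Es)) =
     (\<Sum>m\<leftarrow>ms. phi (fst m) * (\<Prod>x\<leftarrow>snd m. phi (snd x)) * Phi (fprod (U @ map fst (snd m) @ Es)))"
  using assms(2) unfolding eps_def
proof (induction ms)
  case Nil then show ?case using h_lin(3)[OF assms(1)] by simp
next
  case (Cons m ms)
  have "map fst (snd m) \<noteq> []" using Cons.prems by simp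
  then have "Phi (fprod (U @ meps m # Es)) = phi (fst m) * (\<Prod>x\<leftarrow>snd m. phi (snd x)) * Phi (fprod (U @ map fst (snd m) @ Es))"
    unfolding meps_def h_lin(2)[OF assms(1)] using fprod_subst[OF assms(1)] by simp
  then show ?case using Cons h_lin(1)[OF assms(1)] by simp
qed

lemma Q_alt: "Q R u = Phi (snd (bmul lA rA (0, u) R))"
  unfolding Q_def snd_bmul0 ..

lemma Q_bmul: "Q (bmul lA rA (a, f) R) u = Q R (rA u a + u * f)"
  unfolding Q_alt bmul_assoc[symmetric] bmul0 ..

lemma mul_val: "L * val ms = (\<Sum>m\<leftarrow>ms. L * mval m)"
  unfolding val_def by (simp add: sum_list_const_mult)

lemma G:
  assumes "bvalid bs" "wvalid gs0" "g \<in> F0" "x \<in> A0" "altc ch"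
    "ch \<noteq> [] \<Longrightarrow> okx x (fst (hd ch))"
    "ch = [] \<Longrightarrow> bs \<noteq> [] \<Longrightarrow> okx x (fst (hd bs))"
    "ch \<noteq> [] \<Longrightarrow> bs \<noteq> [] \<Longrightarrow> fst (last ch) \<noteq> fst (hd bs)"
  shows "Q (bprod lA rA (map bB bs)) (gword rA (gs0 @ [(g, x * prod_list (map snd ch))]))
       = Phi (gword rA (gs0 @ [(g, x * prod_list (map snd ch))] @ map bE bs))"
  using assms
proof (induction bs arbitrary: gs0 g x ch)
  case Nil
  then show ?case by (simp add: Q_def bprod_def rA_one)
next
  case (Cons t bs)
  obtain i a ms where t: "t = (i, a, ms)" by (cases t) auto
  have i: "i \<in> I" "a \<in> A i" "phi a = 0" "Wv i ms"
    using Cons.prems(1) unfolding bvalid_def t by auto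
  have bsv: "bvalid bs" using Cons.prems(1) unfolding bvalid_def by (cases bs) auto
  have alt: "bs \<noteq> [] \<Longrightarrow> i \<noteq> fst (hd bs)" using Cons.prems(1) unfolding bvalid_def t
    by (cases bs) auto
  define y where "y = x * prod_list (map snd ch)"
  define L where "L = gword rA (gs0 @ [(g, y)])"
  define R where "R = bprod lA rA (map bB bs)"
  define U where "U = map fst gs0 @ [g]"
  define Es where "Es = map fst (map bE bs)"
  define \<pi>0 where "\<pi>0 = (\<Prod>x\<leftarrow>gs0. phi (snd x))"
  have yA0: "y \<in> A0" unfolding y_def using Cons.prems(4) prodch_A0[OF Cons.prems(5)] A0_mul by blast
  have Ev: "wvalid (map bE bs)" using E_valid[OF bsv] .
  have "Q (bprod lA rA (map bB (t # bs))) L = Q R (rA L a) + Q R (L * val ms)"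
    unfolding R_def t by (simp add: bprod_Cons bB_def Q_bmul Q_add)
  moreover have "Q R (rA L a) = 0"
  proof -
    define ch' where "ch' = ch @ [(i, a)]"
    have e1: "rA L a = gword rA (gs0 @ [(g, x * prod_list (map snd ch'))])"
      unfolding L_def y_def ch'_def gword_snoc_rA by (simp add: mult.assoc)
    have altch': "altc ch'" unfolding ch'_def
      using altc_snoc[OF Cons.prems(5) i(1,2,3)] Cons.prems(8) t by simp
    have c1: "okx x (fst (hd ch'))"
      using Cons.prems(6,7) t unfolding ch'_def by (cases ch) auto
    have c3: "bs \<noteq> [] \<Longrightarrow> fst (last ch') \<noteq> fst (hd bs)" using alt unfolding ch'_def by simp
    have "Q R (rA L a) = Phi (gword rA (gs0 @ [(g, x * prod_list (map snd ch'))] @ map bE bs))"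
      unfolding e1 R_def
      by (rule Cons.IH[OF bsv Cons.prems(2,3,4) altch']) (use c1 c3 ch'_def in auto)
    also have "\<dots> = 0"
    proof -
      have "phi (x * prod_list (map snd ch') * 1) = 0"
        by (rule H2) (use altch' c1 in \<open>auto simp: ch'_def okx_def\<close>)
      moreover have "wvalid (gs0 @ [(g, x * prod_list (map snd ch'))] @ map bE bs)"
        using Cons.prems(2,3,4) Ev prodch_A0[OF altch'] A0_mul by simp
      ultimately show ?thesis by (subst wf_formula) auto
    qed
    finally show ?thesis .
  qed
  moreover have "Q R (L * val ms) = \<pi>0 * phi y * Phi (fprod (U @ eps ms # Es))"
  proof -
    have key: "phi (y * c) = phi y * phi c" if "c \<in> A i" for c
    proof (cases "ch = []")
      case True then show ?thesis using pairfree[OF _ i(1) that] Cons.prems(7) t y_def by simp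
    next
      case False
      have "phi (x * prod_list (map snd ch) * c) = 0"
        by (rule H2) (use False Cons.prems(5,6,8) i(1) that t in \<open>auto simp: okx_def\<close>)
      moreover have "phi (x * prod_list (map snd ch) * 1) = 0"
        by (rule H2) (use False Cons.prems(5,6) in \<open>auto simp: okx_def\<close>)
      ultimately show ?thesis unfolding y_def by simp
    qed
    have T2m: "Q R (L * mval m) = \<pi>0 * (phi y * (phi (fst m) * (\<Prod>x\<leftarrow>snd m. phi (snd x)) *
                  Phi (fprod (U @ map fst (snd m) @ Es))))" if m: "m \<in> set ms" for m
    proof -
      have mv: "mvalid i m" using i(4) m unfolding Wv_def by auto
      then have ne: "snd m \<noteq> []" unfolding mvalid_def by auto
      define gm0 where "gm0 = butlast (snd m)"
      define gn where "gn = fst (last (snd m))"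
      define cn where "cn = snd (last (snd m))"
      have sm: "snd m = gm0 @ [(gn, cn)]" unfolding gm0_def gn_def cn_def using ne by simp
      have lin: "last (snd m) \<in> set (snd m)" using ne by simp
      have cnA: "cn \<in> A i" "gn \<in> F i" using mv lin unfolding mvalid_def cn_def gn_def by auto
      have mw: "wvalid (snd m)" using mvalid_w[OF i(1) mv] .
      have fmA: "fst m \<in> A0" using mv A0_base[OF i(1)] unfolding mvalid_def by auto
      have e2: "L * mval m = gword rA ((gs0 @ [(g, y * fst m)] @ gm0) @ [(gn, cn * prod_list (map snd ([] :: ('i \<times> 'a) list)))])"
        unfolding L_def mval_def gword_snoc_mul_lA[OF ne] using sm by simp
      have w0: "wvalid (gs0 @ [(g, y * fst m)] @ gm0)"
        using Cons.prems(2,3) yA0 fmA A0_mul mw unfolding sm by simp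
      have "Q R (L * mval m) = Phi (gword rA ((gs0 @ [(g, y * fst m)] @ gm0) @ [(gn, cn * prod_list (map snd ([] :: ('i \<times> 'a) list)))] @ map bE bs))"
        unfolding e2 R_def
        by (rule Cons.IH[OF bsv w0]) (use cnA F0_base[OF i(1)] A0_base[OF i(1)] alt i(1) altc_def in \<open>auto simp: okx_def\<close>)
      also have "\<dots> = Phi (gword rA (gs0 @ [(g, y * fst m)] @ snd m @ map bE bs))"
        using sm by simp
      also have "\<dots> = \<pi>0 * phi (y * fst m) * (\<Prod>x\<leftarrow>snd m. phi (snd x)) * Phi (fprod (U @ map fst (snd m) @ Es))"
        using w0 mw Ev unfolding sm
        by (subst wf_formula) (auto simp: prod_E prod_E' \<pi>0_def U_def Es_def)
      finally show ?thesis using key mv unfolding mvalid_def by (simp add: mult_ac)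
    qed
    have "Q R (L * val ms) = (\<Sum>m\<leftarrow>ms. Q R (L * mval m))"
      unfolding mul_val Q_sum_list by (simp add: comp_def)
    also have "\<dots> = (\<Sum>m\<leftarrow>ms. \<pi>0 * (phi y * (phi (fst m) * (\<Prod>x\<leftarrow>snd m. phi (snd x)) *
                  Phi (fprod (U @ map fst (snd m) @ Es)))))"
      using T2m by (simp cong: map_cong)
    also have "\<dots> = \<pi>0 * phi y * Phi (fprod (U @ eps ms # Es))"
      using h_eps[of U ms Es] i(4) unfolding U_def Wv_def mvalid_def
      by (simp add: sum_list_const_mult mult.assoc)
    finally show ?thesis .
  qed
  moreover have "Phi (gword rA (gs0 @ [(g, y)] @ map bE (t # bs))) = \<pi>0 * phi y * Phi (fprod (U @ eps ms # Es))"
  proof -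
    have "wvalid (gs0 @ [(g, y)] @ map bE (t # bs))"
      using Cons.prems(2,3) yA0 Ev eps_F[OF i(1,4)] F0_base[OF i(1)] A0_one unfolding t by (simp add: bE_def)
    then show ?thesis by (subst wf_formula) (auto simp: t bE_def prod_E prod_E' phi_one \<pi>0_def U_def Es_def)
  qed
  ultimately show ?case unfolding L_def y_def by simp
qed

lemma bprod_single: "bprod lA rA [x] = x"
  by (simp add: bprod_def bmul_def rA_one)

lemma gword_ones: "es \<noteq> [] \<Longrightarrow> gword rA (map (\<lambda>e. (e, 1)) es) = fprod es"
proof (induction es)
  case Nil then show ?case by simp
next
  case (Cons e es)
  then show ?case by (cases es) (auto simp: rA_one)
qed

lemma bprod_zero: "es \<noteq> [] \<Longrightarrow> bprod lA rA (map (\<lambda>e. (0, e)) es) = (0, fprod es)"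
proof (induction es)
  case Nil then show ?case by simp
next
  case (Cons e es)
  then show ?case by (cases es) (auto simp: bprod_def bmul_def rA_one)
qed

lemma phiP_Q: "phiP lA rA Phi P b = Q b P / Phi P"
  unfolding phiP_def Q_alt ..

definition rep :: "'i \<Rightarrow> 'a \<times> 'f \<Rightarrow> ('a \<times> ('f \<times> 'a) list) list" where
  "rep i b = (SOME ms. Wv i ms \<and> snd b = val ms)"

abbreviation Bi where "Bi i \<equiv> gen_alg (0, 0) badd (bsm smA smF) (bmul lA rA) {(a, f). a \<in> A i \<and> f \<in> F i}"

lemma rep_ok: assumes "i \<in> I" "b \<in> Bi i" shows "Wv i (rep i b) \<and> snd b = val (rep i b)"
proof -
  have "snd b \<in> W i" using B_sub[OF assms(2,1)] by simp
  then have "\<exists>ms. Wv i ms \<and> snd b = val ms" unfolding W_def by auto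
  then show ?thesis unfolding rep_def by (rule someI_ex)
qed

lemma single:
  assumes "bvalid [t]"
  shows "Q (bB t) P = Phi (P * eps (snd (snd t)))"
proof -
  have "Q (bprod lA rA (map bB [t])) (gword rA ([] @ [(P, 1 * prod_list (map snd ([] :: ('i \<times> 'a) list)))]))
     = Phi (gword rA ([] @ [(P, 1 * prod_list (map snd ([] :: ('i \<times> 'a) list)))] @ map bE [t]))"
    by (rule G) (use assms F0_P A0_one in \<open>auto simp: altc_def okx_def\<close>)
  then show ?thesis by (simp add: bprod_single rA_one bE_def)
qed

lemma main:
  "cond_free (bprod lA rA) (phiB phi) (phiP lA rA Phi P) Bi I
     \<longleftrightarrow> boolean_indep (bprod lA rA) (phiP lA rA Phi P) (\<lambda>i. (\<lambda>f. (0, f)) ` F i) I"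
proof
  assume cf: "cond_free (bprod lA rA) (phiB phi) (phiP lA rA Phi P) Bi I"
  show "boolean_indep (bprod lA rA) (phiP lA rA Phi P) (\<lambda>i. (\<lambda>f. (0, f)) ` F i) I"
    unfolding boolean_indep_def
  proof (intro allI impI)
    fix xs :: "('i \<times> 'a \<times> 'f) list"
    assume alt: "alternating xs I (\<lambda>i. (\<lambda>f. (0, f)) ` F i)"
    have "alternating xs I Bi"
      using alt subA_closed(1) unfolding alternating_def by (fastforce intro: gen_base)
    moreover have "\<forall>(i, c)\<in>set xs. phiB phi c = 0"
      using alt unfolding alternating_def phiB_def by auto
    ultimately show "phiP lA rA Phi P (bprod lA rA (map snd xs)) = (\<Prod>x\<leftarrow>xs. phiP lA rA Phi P (snd x))"
      using cf unfolding cond_free_def by blast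
  qed
next
  assume bi: "boolean_indep (bprod lA rA) (phiP lA rA Phi P) (\<lambda>i. (\<lambda>f. (0, f)) ` F i) I"
  show "cond_free (bprod lA rA) (phiB phi) (phiP lA rA Phi P) Bi I"
    unfolding cond_free_def
  proof (intro conjI allI impI)
    show "free_wrt (bprod lA rA) (phiB phi) Bi I"
      unfolding free_wrt_def
    proof (intro allI impI)
      fix xs :: "('i \<times> 'a \<times> 'f) list"
      assume alt: "alternating xs I Bi" and c: "\<forall>(i, c)\<in>set xs. phiB phi c = 0"
      let ?ys = "map (\<lambda>x. (fst x, fst (snd x))) xs"
      have "alternating ?ys I A"
        using alt B_sub unfolding alternating_def by (auto simp: comp_def)
      moreover have "\<forall>(i, c)\<in>set ?ys. phi c = 0" using c unfolding phiB_def by auto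
      ultimately have "phi (prod_list (map snd ?ys)) = 0"
        using free_A unfolding free_wrt_def by blast
      then show "phiB phi (bprod lA rA (map snd xs)) = 0"
        unfolding phiB_def fst_bprod by (simp add: comp_def)
    qed
  next
    fix xs :: "('i \<times> 'a \<times> 'f) list"
    assume alt: "alternating xs I Bi" and c: "\<forall>(i, c)\<in>set xs. phiB phi c = 0"
    define bs where "bs = map (\<lambda>x. (fst x, fst (snd x), rep (fst x) (snd x))) xs"
    have xs_eq: "xs = map (\<lambda>t. (fst t, bB t)) bs"
    proof -
      have "x = (fst x, fst (snd x), val (rep (fst x) (snd x)))" if "x \<in> set xs" for x
        using rep_ok[of "fst x" "snd x"] alt that unfolding alternating_def by (cases x) auto
      then show ?thesis unfolding bs_def bB_def by (simp add: map_idI)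
    qed
    have bv: "bvalid bs"
      using alt c rep_ok B_sub unfolding bs_def bvalid_def alternating_def phiB_def
      by (auto simp: comp_def)
    have ne: "bs \<noteq> []" using alt unfolding alternating_def bs_def by simp
    define es where "es = map (\<lambda>t. eps (snd (snd t))) bs"
    have esne: "es \<noteq> []" using ne es_def by simp
    have sing: "phiP lA rA Phi P (bB t) = Phi (P * eps (snd (snd t))) / Phi P" if "t \<in> set bs" for t
    proof -
      have "bvalid [t]" using bv that unfolding bvalid_def by auto
      then show ?thesis using single phiP_Q by simp
    qed
    have lhs: "phiP lA rA Phi P (bprod lA rA (map snd xs)) = Phi (P * fprod es) / Phi P"
    proof -
      have "Q (bprod lA rA (map bB bs)) (gword rA ([] @ [(P, 1 * prod_list (map snd ([] :: ('i \<times> 'a) list)))]))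
         = Phi (gword rA ([] @ [(P, 1 * prod_list (map snd ([] :: ('i \<times> 'a) list)))] @ map bE bs))"
        by (rule G) (use bv F0_P A0_one in \<open>auto simp: altc_def okx_def\<close>)
      moreover have "map bE bs = map (\<lambda>e. (e, 1)) es" unfolding es_def bE_def by simp
      ultimately have "Q (bprod lA rA (map bB bs)) P = Phi (P * fprod es)"
        using gword_Cons[of "map (\<lambda>e. (e, 1)) es" "(P, 1)"] gword_ones[OF esne] esne by (simp add: rA_one)
      moreover have "map snd xs = map bB bs" by (subst xs_eq) (simp add: comp_def)
      ultimately show ?thesis by (simp add: phiP_Q)
    qed
    let ?zs = "map (\<lambda>t. (fst t, (0::'a, eps (snd (snd t))))) bs"
    have "alternating ?zs I (\<lambda>i. (\<lambda>f. (0, f)) ` F i)"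
      using bv ne eps_F unfolding alternating_def bvalid_def by (auto simp: comp_def)
    then have "phiP lA rA Phi P (bprod lA rA (map snd ?zs)) = (\<Prod>x\<leftarrow>?zs. phiP lA rA Phi P (snd x))"
      using bi unfolding boolean_indep_def by blast
    moreover have "map snd ?zs = map (\<lambda>e. (0, e)) es" unfolding es_def by simp
    ultimately have "phiP lA rA Phi P (0, fprod es) = (\<Prod>t\<leftarrow>bs. Phi (P * eps (snd (snd t))) / Phi P)"
      using bprod_zero[OF esne] by (simp add: phiP_def bmul_def comp_def)
    moreover have "phiP lA rA Phi P (0, fprod es) = Phi (P * fprod es) / Phi P"
      by (simp add: phiP_def bmul_def)
    moreover have "(\<Prod>x\<leftarrow>xs. phiP lA rA Phi P (snd x)) = (\<Prod>t\<leftarrow>bs. Phi (P * eps (snd (snd t))) / Phi P)"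
      by (subst xs_eq) (simp add: comp_def sing cong: map_cong)
    ultimately show "phiP lA rA Phi P (bprod lA rA (map snd xs)) = (\<Prod>x\<leftarrow>xs. phiP lA rA Phi P (snd x))"
      using lhs by simp
  qed
qed

end

theorem theorem4p3:
  fixes smA :: "complex \<Rightarrow> 'a::ring_1 \<Rightarrow> 'a" and \<phi> :: "'a \<Rightarrow> complex"
    and smF :: "complex \<Rightarrow> 'f::ring \<Rightarrow> 'f" and lA :: "'a \<Rightarrow> 'f \<Rightarrow> 'f" and rA :: "'f \<Rightarrow> 'a \<Rightarrow> 'f"
    and \<Phi> :: "'f \<Rightarrow> complex"
    and I :: "'i set" and A :: "'i \<Rightarrow> 'a set" and F :: "'i \<Rightarrow> 'f set" and P :: 'f
  assumes ncps: "ncps_Bp smA \<phi> smF lA rA \<Phi>"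
    and subA: "\<And>i. i \<in> I \<Longrightarrow> subalg 0 (+) smA (*) (A i) \<and> 1 \<in> A i"
    and subF: "\<And>i. i \<in> I \<Longrightarrow> subalg 0 (+) smF (*) (F i)"
    and PhiP: "\<Phi> P \<noteq> 0"
    and wfree: "weakly_Bp_free smA \<phi> smF lA rA \<Phi> A I
                  (\<lambda>j. case j of None \<Rightarrow> FP smF P | Some i \<Rightarrow> F i) (insert None (Some ` I))"
  shows "cond_free (bprod lA rA) (phiB \<phi>) (phiP lA rA \<Phi> P)
           (\<lambda>i. gen_alg (0, 0) badd (bsm smA smF) (bmul lA rA) {(a, f). a \<in> A i \<and> f \<in> F i}) I
         \<longleftrightarrow> boolean_indep (bprod lA rA) (phiP lA rA \<Phi> P) (\<lambda>i. (\<lambda>f. (0, f)) ` F i) I"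
proof -
  interpret T: T43 smA \<phi> smF lA rA \<Phi> I A F P
    by (rule T43.intro[OF ncps subA subF PhiP wfree])
  show ?thesis by (rule T.main)
qed

end
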